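(* (a) An integer $k\ge1$ is a local minimum of the sequence $(p(m))_{m\ge0}$ if and only if $k$ is a positive multiple of $4$. (b) Let $a_j=p(4j)$ for $j\ge0$ be the sequence of negligibility values at the multiples of $4$. An integer $j\ge1$ is a local minimum of $(a_j)_{j\ge0}$ if and only if $j$ is a positive multiple of $4$; that is, the minima among the negligibility minima occur exactly at the integers $16l$, $l\ge1$.
   Context: Every integer $m\ge 0$ is written in binary as $m=\sum_{k\ge1} m_k 2^{k-1}$ with $m_k\in\{0,1\}$. The negligibility is $p(m)=\sum_k (k+1)m_k$. For a real sequence $(a_m)_{m\ge0}$, an index $k\ge1$ is a local minimum if $a_{k-1}>a_k<a_{k+1}$. *)

theory Defs
  imports Complex_Main
begin

text \<open>Negligibility: writing m = sum over k>=1 of m_k 2^(k-1), p(m) = sum_k (k+1) m_k.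
  Bit k-1 of m is bit m (k-1); with i = k-1 the weight is i+2. All bits of index >= m vanish.\<close>
definition negligibility :: "nat \<Rightarrow> nat" where
  "negligibility m = (\<Sum>i<m. if bit m i then i + 2 else 0)"

definition local_min :: "(nat \<Rightarrow> real) \<Rightarrow> nat \<Rightarrow> bool" where
  "local_min a k \<longleftrightarrow> k \<ge> 1 \<and> a (k - 1) > a k \<and> a k < a (k + 1)"

end

theory Submission
  imports Defs
begin

fun g :: "nat \<Rightarrow> nat \<Rightarrow> nat" where
  "g c n = (if n = 0 then 0 else (if odd n then c else 0) + g (c+1) (n div 2))"

declare g.simps[simp del]

lemma g0[simp]: "g c 0 = 0" by (subst g.simps) simp

lemma g_even: "g c (2*n) = g (c+1) n"
  by (cases "n = 0") (simp_all add: g.simps[of c "2*n"])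

lemma g_odd: "g c (Suc (2*n)) = c + g (c+1) n"
  by (simp add: g.simps[of c "Suc (2*n)"])

lemma bit_ge: "m \<le> i \<Longrightarrow> \<not> bit (m::nat) i"
proof -
  assume "m \<le> i"
  hence "m < 2^i" using less_exp[of i] by linarith
  thus ?thesis by (simp add: bit_nat_def)
qed

lemma sum_ext: "m \<le> N \<Longrightarrow> (\<Sum>i<N. if bit (m::nat) i then h i else (0::nat)) = (\<Sum>i<m. if bit m i then h i else 0)"
  by (rule sum.mono_neutral_right) (auto simp: bit_ge)

lemma sum_g: "(\<Sum>i<n. if bit n i then i + c else 0) = g c n"
proof (induction n arbitrary: c rule: less_induct)
  case (less n)
  show ?case
  proof (cases "n = 0")
    case True thus ?thesis by simp
  next
    case False
    then obtain n' where n': "n = Suc n'" by (cases n) auto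
    have "(\<Sum>i<n. if bit n i then i + c else 0)
        = (if bit n 0 then c else 0) + (\<Sum>i<n'. if bit n (Suc i) then Suc i + c else 0)"
      by (simp only: n' sum.lessThan_Suc_shift add_0)
    also have "(\<Sum>i<n'. if bit n (Suc i) then Suc i + c else 0)
        = (\<Sum>i<n'. if bit (n div 2) i then i + (c+1) else 0)"
      by (intro sum.cong) (auto simp: bit_Suc)
    also have "\<dots> = (\<Sum>i<n div 2. if bit (n div 2) i then i + (c+1) else 0)"
      using n' by (intro sum_ext) auto
    also have "\<dots> = g (c+1) (n div 2)" using less False by simp
    finally show ?thesis using False by (simp add: g.simps[of c n] bit_0)
  qed
qed

lemma negl_g: "negligibility m = g 2 m"
  unfolding negligibility_def using sum_g[of m 2] by (simp add: add.commute)

lemma negl4: "negligibility (4*i) = g 4 i"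
proof -
  have "negligibility (4*i) = g 2 (2*(2*i))" using negl_g[of "2*(2*i)"] by simp
  also have "\<dots> = g 4 i" by (simp only: g_even) simp
  finally show ?thesis .
qed

lemma M: "t \<ge> 1 \<Longrightarrow> d \<ge> 1 \<Longrightarrow> g d t \<le> g d (t-1) + d"
proof (induction t arbitrary: d rule: less_induct)
  case (less t)
  show ?case
  proof (cases "even t")
    case False
    then obtain s where t: "t = Suc (2*s)" by (intro that[of "t div 2"]) presburger
    thus ?thesis by (simp add: g_odd g_even)
  next
    case True
    then obtain s where t: "t = 2*s" by blast
    with less.prems have s1: "s \<ge> 1" by simp
    then obtain s' where s': "s = Suc s'" by (cases s) auto
    have "g d t = g (d+1) s" by (simp add: t g_even)
    also have "\<dots> \<le> g (d+1) (s-1) + (d+1)" using less.IH[of s "d+1"] s1 t by simp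
    also have "g d (t-1) = d + g (d+1) (s-1)"
    proof -
      have "t - 1 = Suc (2*s')" using t s' by simp
      thus ?thesis using s' by (simp add: g_odd)
    qed
    ultimately show ?thesis using less.prems by simp
  qed
qed

lemma G: assumes "c \<ge> 2" "k \<ge> 1"
  shows "(g c (k-1) > g c k \<and> g c k < g c (k+1)) \<longleftrightarrow> 4 dvd k"
proof (cases "even k")
  case False
  then obtain n where k: "k = Suc (2*n)" by (intro that[of "k div 2"]) presburger
  have "g c k = c + g c (k-1)" by (simp add: k g_odd g_even)
  moreover have "\<not> 4 dvd k" using False by presburger
  ultimately show ?thesis by simp
next
  case True
  then obtain n where k: "k = 2*n" by blast
  with assms have n1: "n \<ge> 1" by simp
  then obtain n' where n': "n = Suc n'" by (cases n) auto
  have up: "g c (k+1) = c + g c k" by (simp add: k g_odd g_even)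
  have down: "g c (k-1) = c + g (c+1) (n-1)"
  proof -
    have "k - 1 = Suc (2*n')" using k n' by simp
    thus ?thesis using n' by (simp add: g_odd)
  qed
  have gk: "g c k = g (c+1) n" by (simp add: k g_even)
  show ?thesis
  proof (cases "even n")
    case False
    then obtain s where n: "n = Suc (2*s)" by (intro that[of "n div 2"]) presburger
    have "g (c+1) n = c + 1 + g (c+1) (n-1)" by (simp add: n g_odd g_even)
    moreover have "\<not> 4 dvd k" using k n by presburger
    ultimately show ?thesis using down gk by simp
  next
    case True
    then obtain t where n: "n = 2*t" by blast
    with n1 have t1: "t \<ge> 1" by simp
    then obtain t' where t': "t = Suc t'" by (cases t) auto
    have a: "g (c+1) n = g (c+2) t" by (simp add: n g_even)
    have b: "g (c+1) (n-1) = c + 1 + g (c+2) (t-1)"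
    proof -
      have "n - 1 = Suc (2*t')" using n t' by simp
      thus ?thesis using t' by (simp add: g_odd)
    qed
    have "g (c+2) t \<le> g (c+2) (t-1) + (c+2)" using M[OF t1, of "c+2"] by simp
    moreover have "4 dvd k" using k n by simp
    ultimately show ?thesis using a b down gk up assms by (simp add: k)
  qed
qed

theorem theorem3:
  shows "(\<forall>k::nat. k \<ge> 1 \<longrightarrow>
            (local_min (\<lambda>m. real (negligibility m)) k \<longleftrightarrow> 4 dvd k))
       \<and> (\<forall>j::nat. j \<ge> 1 \<longrightarrow>
            (local_min (\<lambda>i. real (negligibility (4 * i))) j \<longleftrightarrow> 4 dvd j))"
proof (intro conjI allI impI)
  fix k :: nat assume "k \<ge> 1"
  thus "local_min (\<lambda>m. real (negligibility m)) k \<longleftrightarrow> 4 dvd k"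
    using G[of 2 k] by (simp add: local_min_def negl_g)
next
  fix j :: nat assume "j \<ge> 1"
  thus "local_min (\<lambda>i. real (negligibility (4 * i))) j \<longleftrightarrow> 4 dvd j"
    using G[of 4 j] by (simp add: local_min_def negl4)
qed

end
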